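(* Let $N\ge1$, $a=(a_1,\dots,a_N)\in\mathbb{R}^N\setminus\{(0,\dots,0)\}$ and $H=(H_1,\dots,H_N)\in]0,1[^N$ be such that there exists $j\in\{1,\dots,N\}$ with $a_j\neq0$ and $H_j\neq1/2$. Then the mixed sub-fractional Brownian motion $(S^H_t(a))_{t\in\mathbb{R}_+}$ with parameters $N,a,H$ is not a Markov process.
   Context: Let $(\Omega,\mathcal F,\mathbb P)$ be a probability space. For $K\in]0,1[$, a fractional Brownian motion on $\mathbb{R}$ with Hurst index $K$ is a continuous centered Gaussian process $\{B^K(t),t\in\mathbb{R}\}$ with $\mathrm{Cov}(B^K(t),B^K(s))=\frac12(|t|^{2K}+|s|^{2K}-|t-s|^{2K})$. The sub-fractional Brownian motion (sfBm) of index $K$ is $\xi^K_t=(B^K_t+B^K_{-t})/\sqrt2$, $t\ge0$; it is a continuous centered Gaussian process with $\mathrm{Cov}(\xi^K_t,\xi^K_s)=s^{2K}+t^{2K}-\frac12\big((s+t)^{2K}+|t-s|^{2K}\big)$. For $N\ge1$, $H\in]0,1[^N$, $a\in\mathbb{R}^N\setminus\{0\}$, the mixed sub-fractional Brownian motion (msfBm) is $S^H_t(a)=\sum_{i=1}^N a_i\xi^{H_i}(t)$, $t\ge0$, where $\xi^{H_1},\dots,\xi^{H_N}$ are independent sfBms with indices $H_1,\dots,H_N$. *)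

theory Defs
  imports "HOL-Probability.Probability"
begin

definition centered_gaussian_process ::
  "'a measure \<Rightarrow> real set \<Rightarrow> (real \<Rightarrow> 'a \<Rightarrow> real) \<Rightarrow> (real \<Rightarrow> real \<Rightarrow> real) \<Rightarrow> bool" where
  "centered_gaussian_process M T X C \<longleftrightarrow>
     (\<forall>t\<in>T. X t \<in> borel_measurable M) \<and>
     (\<forall>(ts :: real list) (cs :: real list) (\<theta>::real).
        set ts \<subseteq> T \<longrightarrow> length cs = length ts \<longrightarrow>
        char (distr M borel (\<lambda>\<omega>. \<Sum>i<length ts. cs ! i * X (ts ! i) \<omega>)) \<theta>
        = complex_of_real (exp (- ((\<Sum>i<length ts. \<Sum>j<length ts.
              cs ! i * cs ! j * C (ts ! i) (ts ! j)) * \<theta>\<^sup>2) / 2)))"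

definition fbm_cov :: "real \<Rightarrow> real \<Rightarrow> real \<Rightarrow> real" where
  "fbm_cov K t s = (\<bar>t\<bar> powr (2*K) + \<bar>s\<bar> powr (2*K) - \<bar>t - s\<bar> powr (2*K)) / 2"

definition is_fbm :: "'a measure \<Rightarrow> real \<Rightarrow> (real \<Rightarrow> 'a \<Rightarrow> real) \<Rightarrow> bool" where
  "is_fbm M K B \<longleftrightarrow> centered_gaussian_process M UNIV B (fbm_cov K) \<and>
     (\<forall>\<omega>\<in>space M. continuous_on UNIV (\<lambda>t. B t \<omega>))"

text \<open>Sub-fractional Brownian motion built from a fBm B (used for t \<ge> 0).\<close>
definition sfbm :: "(real \<Rightarrow> 'a \<Rightarrow> real) \<Rightarrow> real \<Rightarrow> 'a \<Rightarrow> real" where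
  "sfbm B t \<omega> = (B t \<omega> + B (- t) \<omega>) / sqrt 2"

definition msfbm :: "nat \<Rightarrow> (nat \<Rightarrow> real) \<Rightarrow> (nat \<Rightarrow> real \<Rightarrow> 'a \<Rightarrow> real) \<Rightarrow> real \<Rightarrow> 'a \<Rightarrow> real" where
  "msfbm N a B t \<omega> = (\<Sum>i=1..N. a i * sfbm (B i) t \<omega>)"

definition natural_filtration :: "'a measure \<Rightarrow> real set \<Rightarrow> (real \<Rightarrow> 'a \<Rightarrow> real) \<Rightarrow> real \<Rightarrow> 'a measure" where
  "natural_filtration M T X s =
     sigma (space M) {X u -` A \<inter> space M | u A. u \<in> T \<and> u \<le> s \<and> A \<in> sets borel}"

definition gen_sigma :: "'a measure \<Rightarrow> ('a \<Rightarrow> real) \<Rightarrow> 'a measure" where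
  "gen_sigma M Y = sigma (space M) {Y -` A \<inter> space M | A. A \<in> sets borel}"

definition markov_process :: "'a measure \<Rightarrow> real set \<Rightarrow> (real \<Rightarrow> 'a \<Rightarrow> real) \<Rightarrow> bool" where
  "markov_process M T X \<longleftrightarrow>
     (\<forall>s\<in>T. \<forall>t\<in>T. \<forall>A\<in>sets (borel :: real measure). s \<le> t \<longrightarrow>
        (AE \<omega> in M. real_cond_exp M (natural_filtration M T X s) (\<lambda>\<omega>. indicator A (X t \<omega>)) \<omega>
                    = real_cond_exp M (gen_sigma M (X s)) (\<lambda>\<omega>. indicator A (X t \<omega>)) \<omega>))"

end

theory Submission
  imports Defs
begin


lemma taylor_powr_bound:
  fixes e u :: real
  assumes e: "0 < e" "e < 2" and u: "\<bar>u\<bar> \<le> 1/2"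
  shows "\<bar>(1+u) powr e - 1 - e*u\<bar> \<le> 4*u^2"
proof (cases "u = 0")
  case True then show ?thesis by simp
next
  case False
  define diff where "diff = (\<lambda>m::nat. \<lambda>v::real. if m=0 then (1+v) powr e else if m = 1 then e*(1+v) powr (e-1) else e*(e-1)*(1+v) powr (e-2))"
  have D: "\<forall>m t. m < 2 \<and> -1/2 \<le> t \<and> t \<le> 1/2 \<longrightarrow> DERIV (diff m) t :> diff (Suc m) t"
  proof (intro allI impI)
    fix m t assume h: "m < (2::nat) \<and> -1/2 \<le> t \<and> t \<le> (1/2::real)"
    then have tp: "1 + t > 0" by auto
    show "DERIV (diff m) t :> diff (Suc m) t"
    proof (cases "m = 0")
      case True
      have "DERIV (\<lambda>v. (1+v) powr e) t :> e * (1+t) powr (e - of_nat 1) * 1"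
        by (rule DERIV_fun_powr) (auto intro!: derivative_eq_intros simp: tp)
      then show ?thesis using True by (simp add: diff_def)
    next
      case False
      then have m1: "m = 1" using h by auto
      have "DERIV (\<lambda>v. (1+v) powr (e-1)) t :> (e-1) * (1+t) powr (e-1 - of_nat 1) * 1"
        by (rule DERIV_fun_powr) (auto intro!: derivative_eq_intros simp: tp)
      then have "DERIV (\<lambda>v. e * (1+v) powr (e-1)) t :> e * ((e-1) * (1+t) powr (e-1 - of_nat 1) * 1)"
        by (rule DERIV_cmult)
      then show ?thesis using m1 by (simp add: diff_def algebra_simps)
    qed
  qed
  have d0: "diff 0 = (\<lambda>v. (1+v) powr e)" by (simp add: diff_def)
  have ex: "\<exists>t. (if u < 0 then u < t \<and> t < 0 else 0 < t \<and> t < u) \<and>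
     (1+u) powr e = (\<Sum>m<2. (diff m 0 / fact m) * (u - 0)^m) + (diff 2 t / fact 2) * (u - 0)^2"
    by (rule Taylor[OF _ d0 D]) (use u False in auto)
  then obtain t where t: "(if u < 0 then u < t \<and> t < 0 else 0 < t \<and> t < u)"
     "(1+u) powr e = (\<Sum>m<2. (diff m 0 / fact m) * (u - 0)^m) + (diff 2 t / fact 2) * (u - 0)^2"
    by blast
  have tb: "\<bar>t\<bar> \<le> 1/2" using t(1) u by (auto split: if_splits)
  have eq: "(1+u) powr e - 1 - e*u = e*(e-1)*(1+t) powr (e-2) / 2 * u^2"
    using t(2) by (simp add: diff_def numeral_2_eq_2 fact_2)
  have p1: "(1+t) powr (e-2) \<le> (1/2) powr (e-2)"
    using tb e by (intro powr_mono2') auto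
  have p2: "(1/2::real) powr (e-2) = 2 powr (2-e)"
    by (simp add: powr_divide powr_minus_divide powr_diff)
  have p3: "(2::real) powr (2-e) \<le> 2 powr 2"
    using e by (intro powr_mono) auto
  have p4: "(1+t) powr (e-2) \<le> 4" using p1 p2 p3 by simp
  have p5: "0 \<le> (1+t) powr (e-2)" by simp
  have ee: "\<bar>e*(e-1)\<bar> \<le> 2"
  proof (cases "e \<ge> 1")
    case True
    have "e*(e-1) \<le> 2*1" using e True by (intro mult_mono) auto
    moreover have "0 \<le> e*(e-1)" using True e by simp
    ultimately show ?thesis by simp
  next
    case False
    have "e*(1-e) \<le> 1*1" using e False by (intro mult_mono) auto
    then show ?thesis using False e by (simp add: abs_if algebra_simps)
  qed
  have "\<bar>(1+u) powr e - 1 - e*u\<bar> = \<bar>e*(e-1)\<bar> * (1+t) powr (e-2) / 2 * u^2"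
    unfolding eq by (simp add: abs_mult)
  also have "\<dots> \<le> 2 * 4 / 2 * u^2"
    by (intro mult_right_mono divide_right_mono mult_mono ee p4 p5) auto
  finally show ?thesis by simp
qed


lemma D_bound:
  fixes e x r :: real
  assumes e: "0 < e" "e < 2" and x: "0 < x" and r: "0 \<le> r" "r \<le> x/2"
  shows "\<bar>(x+r) powr e + (x-r) powr e - 2 * x powr e\<bar> \<le> 8 * r^2 * x powr (e-2)"
proof -
  define u where "u = r/x"
  have u: "\<bar>u\<bar> \<le> 1/2" "\<bar>-u\<bar> \<le> 1/2" using r x by (auto simp: u_def field_simps)
  have x1: "x + r = x * (1+u)" and x2: "x - r = x * (1 + (-u))" using x by (auto simp: u_def field_simps)
  have p1: "(x+r) powr e = x powr e * (1+u) powr e"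
    unfolding x1 using x u by (auto intro!: powr_mult)
  have p2: "(x-r) powr e = x powr e * (1+(-u)) powr e"
    unfolding x2 using x u by (auto intro!: powr_mult)
  have "(x+r) powr e + (x-r) powr e - 2 * x powr e
     = x powr e * (((1+u) powr e - 1 - e*u) + ((1+(-u)) powr e - 1 - e*(-u)))"
    unfolding p1 p2 by (simp add: algebra_simps)
  also have "\<bar>\<dots>\<bar> \<le> x powr e * (4*u^2 + 4*(-u)^2)"
  proof -
    have b1: "\<bar>(1+u) powr e - 1 - e*u\<bar> \<le> 4*u^2" by (rule taylor_powr_bound[OF e u(1)])
    have b2: "\<bar>(1+(-u)) powr e - 1 - e*(-u)\<bar> \<le> 4*(-u)^2" by (rule taylor_powr_bound[OF e u(2)])
    have "\<bar>((1+u) powr e - 1 - e*u) + ((1+(-u)) powr e - 1 - e*(-u))\<bar> \<le> 4*u^2 + 4*(-u)^2"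
      using b1 b2 abs_triangle_ineq[of "(1+u) powr e - 1 - e*u" "(1+(-u)) powr e - 1 - e*(-u)"] by linarith
    from mult_left_mono[OF this, of "x powr e"] show ?thesis by (simp add: abs_mult)
  qed
  also have "\<dots> = 8 * r^2 * (x powr e / x^2)"
    using x by (simp add: u_def field_simps power2_eq_square)
  also have "x powr e / x^2 = x powr (e-2)"
    using x by (simp add: powr_diff)
  finally show ?thesis .
qed

definition CC :: "real \<Rightarrow> real \<Rightarrow> real \<Rightarrow> real" where
  "CC K x y = (fbm_cov K x y + fbm_cov K x (-y) + fbm_cov K (-x) y + fbm_cov K (-x) (-y)) / 2"

definition RR :: "nat \<Rightarrow> (nat \<Rightarrow> real) \<Rightarrow> (nat \<Rightarrow> real) \<Rightarrow> real \<Rightarrow> real \<Rightarrow> real" where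
  "RR N a H x y = (\<Sum>i\<in>{1..N}. (a i)^2 * CC (H i) x y)"

lemma CC_sym: "CC K x y = CC K y x"
  unfolding CC_def fbm_cov_def by (simp add: abs_minus_commute algebra_simps)

lemma RR_sym: "RR N a H x y = RR N a H y x"
  unfolding RR_def using CC_sym by simp

lemma CC_eq:
  assumes "0 \<le> x" "x \<le> y"
  shows "CC K x y = x powr (2*K) - ((y+x) powr (2*K) + (y-x) powr (2*K) - 2 * y powr (2*K)) / 2"
proof -
  have a1: "\<bar>x - y\<bar> = y - x" "\<bar>x - - y\<bar> = y + x" "\<bar>- x - y\<bar> = y + x" "\<bar>- x - - y\<bar> = y - x"
    "\<bar>x\<bar> = x" "\<bar>y\<bar> = y" "\<bar>-x\<bar> = x" "\<bar>-y\<bar> = y"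
    using assms by auto
  show ?thesis unfolding CC_def fbm_cov_def a1 by (simp add: field_simps)
qed


lemma zero_by_powr_bound:
  fixes c K \<alpha> \<delta> :: real
  assumes "0 < \<delta>" "0 < \<alpha>" and b: "\<And>r. 0 < r \<Longrightarrow> r \<le> \<delta> \<Longrightarrow> \<bar>c\<bar> \<le> K * r powr \<alpha>"
  shows "c = 0"
proof -
  have lim: "((\<lambda>r. K * r powr \<alpha>) \<longlongrightarrow> K * 0) (at_right 0)"
    by (intro tendsto_mult tendsto_const tendsto_zero_powrI[where b=\<alpha>])
       (auto simp: assms eventually_at_right_field intro!: exI[of _ 1])
  have ev: "eventually (\<lambda>r. \<bar>c\<bar> \<le> K * r powr \<alpha>) (at_right 0)"
    unfolding eventually_at_right_field using assms by (intro exI[of _ \<delta>]) auto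
  have "\<bar>c\<bar> \<le> K * 0"
    by (rule tendsto_lowerbound[OF lim ev]) simp
  then show ?thesis by simp
qed

context
  fixes N :: nat and a H :: "nat \<Rightarrow> real"
  assumes hH: "\<forall>i\<in>{1..N}. 0 < H i \<and> H i < 1"
begin

definition "PP x = (\<Sum>i\<in>{1..N}. (a i)^2 * x powr (2 * H i))"
definition "EE y x = (\<Sum>i\<in>{1..N}. (a i)^2 * ((y+x) powr (2 * H i) + (y-x) powr (2 * H i) - 2 * y powr (2 * H i)))"
definition "GG y = (\<Sum>i\<in>{1..N}. (a i)^2 * y powr (2 * H i - 2))"

lemma RR_split:
  assumes "0 \<le> x" "x \<le> y"
  shows "RR N a H x y = PP x - EE y x / 2"
proof -
  have "RR N a H x y = (\<Sum>i\<in>{1..N}. (a i)^2 * x powr (2 * H i) - (a i)^2 * ((y+x) powr (2 * H i) + (y-x) powr (2 * H i) - 2 * y powr (2 * H i)) / 2)"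
    unfolding RR_def by (intro sum.cong) (simp_all add: CC_eq[OF assms] algebra_simps)
  also have "\<dots> = PP x - EE y x / 2" unfolding PP_def EE_def by (simp add: sum_subtractf sum_divide_distrib)
  finally show ?thesis .
qed

lemma EE_bound:
  assumes "0 < y" "0 \<le> x" "x \<le> y/2"
  shows "\<bar>EE y x\<bar> \<le> 8 * x^2 * GG y"
proof -
  have "\<bar>EE y x\<bar> \<le> (\<Sum>i\<in>{1..N}. \<bar>(a i)^2 * ((y+x) powr (2 * H i) + (y-x) powr (2 * H i) - 2 * y powr (2 * H i))\<bar>)"
    unfolding EE_def by (rule sum_abs)
  also have "\<dots> \<le> (\<Sum>i\<in>{1..N}. (a i)^2 * (8 * x^2 * y powr (2 * H i - 2)))"
  proof (rule sum_mono)
    fix i assume i: "i \<in> {1..N}"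
    have "\<bar>(y+x) powr (2 * H i) + (y-x) powr (2 * H i) - 2 * y powr (2 * H i)\<bar> \<le> 8 * x^2 * y powr (2 * H i - 2)"
      using hH i assms by (intro D_bound) auto
    then show "\<bar>(a i)^2 * ((y+x) powr (2 * H i) + (y-x) powr (2 * H i) - 2 * y powr (2 * H i))\<bar> \<le> (a i)^2 * (8 * x^2 * y powr (2 * H i - 2))"
      unfolding abs_mult abs_power2 by (intro mult_left_mono) auto
  qed
  also have "\<dots> = 8 * x^2 * GG y" unfolding GG_def by (simp add: sum_distrib_left algebra_simps)
  finally show ?thesis .
qed

lemma RR_pos:
  assumes j: "j \<in> {1..N}" "a j \<noteq> 0" and s: "0 < s"
  shows "0 < RR N a H s s"
proof -
  have CCpos: "0 < CC K s s" if K: "0 < K" "K < 1" for K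
  proof -
    have e0: "CC K s s = s powr (2*K) - ((s+s) powr (2*K) + (s-s) powr (2*K) - 2 * s powr (2*K)) / 2"
      by (rule CC_eq) (use s in auto)
    have "s + s = 2 * s" by simp
    with e0 have "CC K s s = s powr (2*K) - ((2 * s) powr (2*K) - 2 * s powr (2*K)) / 2"
      by simp
    also have "(2 * s) powr (2*K) = 2 powr (2*K) * s powr (2*K)" using s by (simp add: powr_mult)
    finally have eq: "CC K s s = s powr (2*K) * (4 - 2 powr (2*K)) / 2" by (simp add: field_simps)
    have "(2::real) powr (2*K) < 2 powr 2" using K by (intro powr_less_mono) auto
    then show ?thesis unfolding eq using s by simp
  qed
  have cp: "0 < CC (H i) s s" if "i \<in> {1..N}" for i using hH that CCpos by auto
  show ?thesis unfolding RR_def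
  proof (rule sum_pos2[of _ j])
    show "0 < (a j)^2 * CC (H j) s s" using cp[OF j(1)] j(2) by simp
    show "\<And>i. i \<in> {1..N} \<Longrightarrow> 0 \<le> (a i)^2 * CC (H i) s s" using cp by (simp add: less_imp_le)
  qed (use j in auto)
qed

lemma cov_not_markov:
  assumes hj: "\<exists>j\<in>{1..N}. a j \<noteq> 0 \<and> H j \<noteq> 1/2"
  shows "\<exists>r s t. 0 < r \<and> r < s \<and> s < t \<and> RR N a H s s \<noteq> 0 \<and>
           RR N a H t r * RR N a H s s \<noteq> RR N a H r s * RR N a H t s"
proof (rule ccontr)
  assume nt: "\<not> ?thesis"
  obtain j where j: "j \<in> {1..N}" "a j \<noteq> 0" "H j \<noteq> 1/2" using hj by blast
  note Rp = RR_pos[OF j(1,2)]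
  have H0: "RR N a H t r * RR N a H s s = RR N a H r s * RR N a H t s" if "0 < r" "r < s" "s < t" for r s t
  proof -
    have "RR N a H s s \<noteq> 0" using Rp[of s] that by simp
    then show ?thesis using nt that by blast
  qed
  have GGnn: "0 \<le> GG y" for y unfolding GG_def by (intro sum_nonneg) auto
  have stepA: "RR N a H s s = RR N a H t s" if st: "0 < s" "s < t" for s t
  proof -
    define c where "c = RR N a H s s - RR N a H t s"
    define K0 where "K0 = 4 * (GG t * \<bar>RR N a H s s\<bar> + GG s * \<bar>RR N a H t s\<bar>)"
    have "c = 0"
    proof (rule zero_by_powr_bound[of "s/2" "2 - 2 * H j" c "K0 / (a j)^2"])
      show "0 < s/2" using st by simp
      show "0 < 2 - 2 * H j" using hH j by auto
      fix r assume r: "0 < r" "r \<le> s/2"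
      have e1: "RR N a H t r = PP r - EE t r / 2"
        using RR_sym[of N a H t r] RR_split[of r t] r st by auto
      have e2: "RR N a H r s = PP r - EE s r / 2"
        using RR_split[of r s] r st by auto
      have "(PP r - EE t r / 2) * RR N a H s s = (PP r - EE s r / 2) * RR N a H t s"
        using H0[of r s t] r st e1 e2 by auto
      then have key: "PP r * c = (EE t r * RR N a H s s - EE s r * RR N a H t s) / 2"
        unfolding c_def by (simp add: algebra_simps)
      have b1: "\<bar>EE t r\<bar> \<le> 8 * r^2 * GG t" using EE_bound[of t r] r st by auto
      have b2: "\<bar>EE s r\<bar> \<le> 8 * r^2 * GG s" using EE_bound[of s r] r st by auto
      have "\<bar>PP r * c\<bar> \<le> (\<bar>EE t r\<bar> * \<bar>RR N a H s s\<bar> + \<bar>EE s r\<bar> * \<bar>RR N a H t s\<bar>) / 2"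
      proof -
        have "\<bar>EE t r * RR N a H s s - EE s r * RR N a H t s\<bar> \<le> \<bar>EE t r * RR N a H s s\<bar> + \<bar>EE s r * RR N a H t s\<bar>"
          by (rule abs_triangle_ineq4)
        then show ?thesis unfolding key by (simp add: abs_mult)
      qed
      also have "\<dots> \<le> (8 * r^2 * GG t * \<bar>RR N a H s s\<bar> + 8 * r^2 * GG s * \<bar>RR N a H t s\<bar>) / 2"
        by (intro divide_right_mono add_mono mult_right_mono b1 b2) auto
      also have "\<dots> = r^2 * K0" by (simp add: K0_def algebra_simps)
      finally have b3: "\<bar>PP r\<bar> * \<bar>c\<bar> \<le> r^2 * K0" by (simp add: abs_mult)
      have pj: "(a j)^2 * r powr (2 * H j) \<le> PP r"
        unfolding PP_def using j by (intro member_le_sum[where f="\<lambda>i. (a i)^2 * r powr (2 * H i)"]) auto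
      have pjpos: "0 < (a j)^2 * r powr (2 * H j)" using j r by auto
      have "(a j)^2 * r powr (2 * H j) * \<bar>c\<bar> \<le> \<bar>PP r\<bar> * \<bar>c\<bar>"
        using pj pjpos by (intro mult_right_mono) auto
      then have "(a j)^2 * r powr (2 * H j) * \<bar>c\<bar> \<le> r^2 * K0" using b3 by linarith
      then have "\<bar>c\<bar> \<le> r^2 * K0 / ((a j)^2 * r powr (2 * H j))"
        using pjpos by (simp add: field_simps)
      also have "r^2 * K0 / ((a j)^2 * r powr (2 * H j)) = K0 / (a j)^2 * (r powr 2 / r powr (2 * H j))"
        using r by (simp add: powr_numeral)
      also have "r powr 2 / r powr (2 * H j) = r powr (2 - 2 * H j)"
        using r by (simp add: powr_diff)
      finally show "\<bar>c\<bar> \<le> K0 / (a j)^2 * r powr (2 - 2 * H j)" .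
    qed
    then show ?thesis unfolding c_def by simp
  qed
  have stepB: "RR N a H s s = PP s" if s: "0 < s" for s
  proof -
    have GGlim: "(GG \<longlongrightarrow> 0) at_top"
      unfolding GG_def
      by (intro tendsto_null_sum tendsto_mult_right_zero tendsto_neg_powr filterlim_ident)
         (use hH in auto)
    then have lim: "((\<lambda>t. 4 * s^2 * GG t) \<longlongrightarrow> 4 * s^2 * 0) at_top"
      by (intro tendsto_mult tendsto_const)
    have ev: "eventually (\<lambda>t. \<bar>RR N a H s s - PP s\<bar> \<le> 4 * s^2 * GG t) at_top"
      using eventually_ge_at_top[of "2 * s"]
    proof eventually_elim
      case (elim t)
      have "RR N a H s s = RR N a H s t" using stepA[of s t] RR_sym[of N a H t s] s elim by auto
      also have "\<dots> = PP s - EE t s / 2" using RR_split[of s t] s elim by auto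
      finally have "\<bar>RR N a H s s - PP s\<bar> = \<bar>EE t s\<bar> / 2" by simp
      also have "\<dots> \<le> 8 * s^2 * GG t / 2" using EE_bound[of t s] s elim by (intro divide_right_mono) auto
      finally show ?case by (simp add: ac_simps)
    qed
    have "\<bar>RR N a H s s - PP s\<bar> \<le> 4 * s^2 * 0"
      by (rule tendsto_lowerbound[OF lim ev]) simp
    then show ?thesis by simp
  qed
  define coef where "coef i = (a i)^2 * (2 powr (2 * H i) - 2)" for i
  have stepC: "(\<Sum>i\<in>{1..N}. coef i * s powr (2 * H i)) = 0" if s: "0 < s" for s
  proof -
    have "EE s s = 0" using stepB[OF s] RR_split[of s s] s by auto
    moreover have "EE s s = (\<Sum>i\<in>{1..N}. coef i * s powr (2 * H i))"
      unfolding EE_def coef_def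
    proof (rule sum.cong[OF refl])
      fix i assume i: "i \<in> {1..N}"
      have "(s+s) powr (2 * H i) = 2 powr (2 * H i) * s powr (2 * H i)"
        using s by (simp add: powr_mult mult_2[symmetric])
      then show "(a i)^2 * ((s+s) powr (2 * H i) + (s-s) powr (2 * H i) - 2 * s powr (2 * H i)) =
          (a i)^2 * (2 powr (2 * H i) - 2) * s powr (2 * H i)"
        by (simp add: algebra_simps)
    qed
    ultimately show ?thesis by simp
  qed
  define J where "J = {i\<in>{1..N}. a i \<noteq> 0 \<and> H i \<noteq> 1/2}"
  have Jfin: "finite J" and Jne: "J \<noteq> {}" and jJ: "j \<in> J" using j by (auto simp: J_def)
  define h where "h = Min (H ` J)"
  have hle: "h \<le> H i" if "i \<in> J" for i using Jfin that by (simp add: h_def)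
  have "h \<in> H ` J" unfolding h_def using Jfin Jne by (intro Min_in) auto
  then obtain i0 where i0: "i0 \<in> J" "H i0 = h" by blast
  have coef0: "coef i = 0" if "i \<in> {1..N} - J" for i
  proof -
    from that have "a i = 0 \<or> H i = 1/2" by (auto simp: J_def)
    then show ?thesis
    proof
      assume "a i = 0" then show ?thesis by (simp add: coef_def)
    next
      assume "H i = 1/2" then have "2 * H i = 1" by simp
      then show ?thesis by (simp add: coef_def)
    qed
  qed
  have stepC': "(\<Sum>i\<in>J. coef i * s powr (2 * H i - 2 * h)) = 0" if s: "0 < s" for s
  proof -
    have "(\<Sum>i\<in>J. coef i * s powr (2 * H i)) = (\<Sum>i\<in>{1..N}. coef i * s powr (2 * H i))"
      using coef0 by (intro sum.mono_neutral_left) (auto simp: J_def)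
    then have z: "(\<Sum>i\<in>J. coef i * s powr (2 * H i)) = 0" using stepC[OF s] by simp
    have "(\<Sum>i\<in>J. coef i * s powr (2 * H i - 2 * h)) = (\<Sum>i\<in>J. coef i * s powr (2 * H i) * s powr (- 2 * h))"
    proof (rule sum.cong[OF refl])
      fix i
      have "s powr (2 * H i - 2 * h) = s powr (2 * H i + (- 2 * h))" by simp
      also have "\<dots> = s powr (2 * H i) * s powr (- 2 * h)" by (rule powr_add)
      finally show "coef i * s powr (2 * H i - 2 * h) = coef i * s powr (2 * H i) * s powr (- 2 * h)" by simp
    qed
    also have "\<dots> = (\<Sum>i\<in>J. coef i * s powr (2 * H i)) * s powr (- 2 * h)"
      by (simp add: sum_distrib_right)
    finally have "(\<Sum>i\<in>J. coef i * s powr (2 * H i - 2 * h)) = (\<Sum>i\<in>J. coef i * s powr (2 * H i)) * s powr (- 2 * h)" .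
    then show ?thesis using z by simp
  qed
  define L where "L i = (if H i = h then 1 else (0::real))" for i
  have limi: "((\<lambda>s. s powr (2 * H i - 2 * h)) \<longlongrightarrow> L i) (at_right 0)" if i: "i \<in> J" for i
  proof (cases "H i = h")
    case True
    have ev: "eventually (\<lambda>s. s powr (2 * H i - 2 * h) = 1) (at_right (0::real))"
      unfolding eventually_at_right_field using True by (intro exI[of _ 1]) auto
    have "L i = 1" using True by (simp add: L_def)
    then show ?thesis using tendsto_eventually[OF ev] by simp
  next
    case False
    then have "0 < 2 * H i - 2 * h" using hle[OF i] by auto
    then have "((\<lambda>s. s powr (2 * H i - 2 * h)) \<longlongrightarrow> 0) (at_right (0::real))"
      by (intro tendsto_zero_powrI[where b="2 * H i - 2 * h"] tendsto_ident_at tendsto_const)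
         (simp_all add: eventually_at_right_field exI[of _ 1])
    moreover have "L i = 0" using False by (simp add: L_def)
    ultimately show ?thesis by simp
  qed
  have lim: "((\<lambda>s. \<Sum>i\<in>J. coef i * s powr (2 * H i - 2 * h)) \<longlongrightarrow> (\<Sum>i\<in>J. coef i * L i)) (at_right 0)"
    by (intro tendsto_sum tendsto_mult tendsto_const limi)
  have ev0: "eventually (\<lambda>s. (\<Sum>i\<in>J. coef i * s powr (2 * H i - 2 * h)) = 0) (at_right (0::real))"
    unfolding eventually_at_right_field using stepC' by (intro exI[of _ 1]) auto
  have lim0: "((\<lambda>s. \<Sum>i\<in>J. coef i * s powr (2 * H i - 2 * h)) \<longlongrightarrow> 0) (at_right 0)"
    by (rule tendsto_eventually[OF ev0])
  have sum0: "(\<Sum>i\<in>J. coef i * L i) = 0"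
    using tendsto_unique[OF _ lim lim0] by simp
  define X where "X = 2 powr (2 * h) - (2::real)"
  define Y where "Y = (\<Sum>i\<in>J. if H i = h then (a i)^2 else 0)"
  have eqXY: "(\<Sum>i\<in>J. coef i * L i) = X * Y"
    unfolding X_def Y_def sum_distrib_left by (intro sum.cong) (auto simp: coef_def L_def)
  have Ypos: "0 < Y"
    unfolding Y_def using i0 Jfin by (intro sum_pos2[of _ i0]) (auto simp: J_def)
  have Xne: "X \<noteq> 0"
  proof
    assume "X = 0"
    then have "2 powr (2 * h) = (2::real)" by (simp add: X_def)
    then have "(2::real) powr (2 * h) = 2 powr 1" by simp
    then have "2 * h = 1" by (subst (asm) powr_inj) auto
    then show False using i0 by (auto simp: J_def)
  qed
  have n0: "X * Y \<noteq> 0" using Xne Ypos by simp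
  have "X * Y = 0" using eqXY sum0 by linarith
  with n0 show False by blast
qed

end



lemma split_sum2: "(\<Sum>k<n+m. f k) = (\<Sum>k<n. f k) + (\<Sum>k<m. f (n+k))"
  for f :: "nat \<Rightarrow> 'b::comm_monoid_add"
  by (induction m) (simp_all add: add_ac)

lemma fbm_meas:
  assumes "is_fbm M K B" shows "B t \<in> borel_measurable M"
  using assms unfolding is_fbm_def centered_gaussian_process_def by auto

lemma fbm_char:
  assumes "is_fbm M K B" "length cs = length ts"
  shows "char (distr M borel (\<lambda>\<omega>. \<Sum>i<length ts. cs ! i * B (ts ! i) \<omega>)) \<theta>
        = complex_of_real (exp (- ((\<Sum>i<length ts. \<Sum>j<length ts.
              cs ! i * cs ! j * fbm_cov K (ts ! i) (ts ! j)) * \<theta>\<^sup>2) / 2))"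
  using assms unfolding is_fbm_def centered_gaussian_process_def by auto

lemma gauss_msfbm:
  fixes M :: "'a measure" and N :: nat and a H :: "nat \<Rightarrow> real"
    and B :: "nat \<Rightarrow> real \<Rightarrow> 'a \<Rightarrow> real"
  assumes P: "prob_space M"
    and fbm: "\<forall>i\<in>{1..N}. is_fbm M (H i) (B i)"
    and ind: "prob_space.indep_vars M (\<lambda>_. Pi\<^sub>M UNIV (\<lambda>_. borel)) (\<lambda>i \<omega>. \<lambda>t. B i t \<omega>) {1..N}"
    and len: "length cs = length ts"
  shows "char (distr M borel (\<lambda>\<omega>. \<Sum>k<length ts. cs ! k * msfbm N a B (ts ! k) \<omega>)) \<theta>
        = complex_of_real (exp (- ((\<Sum>k<length ts. \<Sum>l<length ts.
              cs ! k * cs ! l * RR N a H (ts ! k) (ts ! l)) * \<theta>\<^sup>2) / 2))"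
proof -
  interpret prob_space M by (rule P)
  define n where "n = length ts"
  define ts2 where "ts2 = ts @ map uminus ts"
  define cs2 where "cs2 i = map (\<lambda>c. a i / sqrt 2 * c) (cs @ cs)" for i
  define Z where "Z i \<omega> = (\<Sum>k<length ts2. cs2 i ! k * B i (ts2 ! k) \<omega>)" for i \<omega>
  have lts2: "length ts2 = n + n" and lcs2: "length (cs2 i) = length ts2" for i
    using len by (simp_all add: ts2_def cs2_def n_def)
  have ts2a: "ts2 ! k = ts ! k" and ts2b: "ts2 ! (n+k) = - (ts ! k)" if "k < n" for k
    using that by (simp_all add: ts2_def n_def nth_append)
  have cs2a: "cs2 i ! k = a i / sqrt 2 * cs ! k" and cs2b: "cs2 i ! (n+k) = a i / sqrt 2 * cs ! k"
    if "k < n" for i k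
    using that len by (simp_all add: cs2_def n_def nth_append)
  have Zeq: "Z i \<omega> = (\<Sum>k<n. cs ! k * (a i * sfbm (B i) (ts ! k) \<omega>))" for i \<omega>
  proof -
    have "Z i \<omega> = (\<Sum>k<n. cs2 i ! k * B i (ts2 ! k) \<omega>) + (\<Sum>k<n. cs2 i ! (n+k) * B i (ts2 ! (n+k)) \<omega>)"
      unfolding Z_def lts2 by (rule split_sum2)
    also have "\<dots> = (\<Sum>k<n. a i / sqrt 2 * cs ! k * B i (ts ! k) \<omega> + a i / sqrt 2 * cs ! k * B i (- (ts ! k)) \<omega>)"
      by (simp add: sum.distrib ts2a ts2b cs2a cs2b)
    also have "\<dots> = (\<Sum>k<n. cs ! k * (a i * sfbm (B i) (ts ! k) \<omega>))"
      by (intro sum.cong) (simp_all add: sfbm_def field_simps)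
    finally show ?thesis .
  qed
  have Xeq: "(\<Sum>k<length ts. cs ! k * msfbm N a B (ts ! k) \<omega>) = (\<Sum>i\<in>{1..N}. Z i \<omega>)" for \<omega>
    unfolding Zeq msfbm_def n_def sum_distrib_left by (rule sum.swap)
  have indZ: "indep_vars (\<lambda>_. borel) Z {1..N}"
  proof -
    have "indep_vars (\<lambda>_. borel) (\<lambda>i \<omega>. (\<lambda>f. \<Sum>k<length ts2. cs2 i ! k * f (ts2 ! k)) ((\<lambda>t. B i t \<omega>))) {1..N}"
      by (rule indep_vars_compose2[OF ind]) measurable
    then show ?thesis unfolding Z_def by simp
  qed
  define Q where "Q i = (\<Sum>k<length ts2. \<Sum>l<length ts2. cs2 i ! k * cs2 i ! l * fbm_cov (H i) (ts2 ! k) (ts2 ! l))" for i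
  have charZ: "char (distr M borel (Z i)) \<theta> = complex_of_real (exp (- (Q i * \<theta>\<^sup>2) / 2))" if "i \<in> {1..N}" for i
    unfolding Z_def Q_def using fbm_char[of M "H i" "B i" "cs2 i" ts2] fbm that lcs2 by auto
  have Qeq: "Q i = (a i)^2 * (\<Sum>k<n. \<Sum>l<n. cs ! k * cs ! l * CC (H i) (ts ! k) (ts ! l))" for i
  proof -
    have "Q i = (\<Sum>k<n+n. \<Sum>l<n+n. cs2 i ! k * cs2 i ! l * fbm_cov (H i) (ts2 ! k) (ts2 ! l))"
      unfolding Q_def lts2 ..
    also have "\<dots> = (\<Sum>k<n. \<Sum>l<n. cs2 i ! k * cs2 i ! l * fbm_cov (H i) (ts2 ! k) (ts2 ! l)
        + cs2 i ! k * cs2 i ! (n+l) * fbm_cov (H i) (ts2 ! k) (ts2 ! (n+l))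
        + cs2 i ! (n+k) * cs2 i ! l * fbm_cov (H i) (ts2 ! (n+k)) (ts2 ! l)
        + cs2 i ! (n+k) * cs2 i ! (n+l) * fbm_cov (H i) (ts2 ! (n+k)) (ts2 ! (n+l)))"
      by (simp add: split_sum2 sum.distrib add_ac)
    also have "\<dots> = (\<Sum>k<n. \<Sum>l<n. (a i)^2 * (cs ! k * cs ! l * CC (H i) (ts ! k) (ts ! l)))"
    proof (intro sum.cong refl)
      fix k l assume "k \<in> {..<n}" "l \<in> {..<n}"
      then have kl: "k < n" "l < n" by auto
      have sq: "a i / sqrt 2 * (a i / sqrt 2) = (a i)^2 / 2"
        by (simp add: power2_eq_square field_simps)
      show "cs2 i ! k * cs2 i ! l * fbm_cov (H i) (ts2 ! k) (ts2 ! l)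
        + cs2 i ! k * cs2 i ! (n+l) * fbm_cov (H i) (ts2 ! k) (ts2 ! (n+l))
        + cs2 i ! (n+k) * cs2 i ! l * fbm_cov (H i) (ts2 ! (n+k)) (ts2 ! l)
        + cs2 i ! (n+k) * cs2 i ! (n+l) * fbm_cov (H i) (ts2 ! (n+k)) (ts2 ! (n+l))
        = (a i)^2 * (cs ! k * cs ! l * CC (H i) (ts ! k) (ts ! l))"
        unfolding ts2a[OF kl(1)] ts2a[OF kl(2)] ts2b[OF kl(1)] ts2b[OF kl(2)]
          cs2a[OF kl(1)] cs2a[OF kl(2)] cs2b[OF kl(1)] cs2b[OF kl(2)] CC_def
        using sq by (simp add: field_simps power2_eq_square)
    qed
    also have "\<dots> = (a i)^2 * (\<Sum>k<n. \<Sum>l<n. cs ! k * cs ! l * CC (H i) (ts ! k) (ts ! l))"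
      by (simp add: sum_distrib_left)
    finally show ?thesis .
  qed
  have sumQ: "(\<Sum>i\<in>{1..N}. Q i) = (\<Sum>k<n. \<Sum>l<n. cs ! k * cs ! l * RR N a H (ts ! k) (ts ! l))"
  proof -
    have "(\<Sum>i\<in>{1..N}. Q i) = (\<Sum>i\<in>{1..N}. \<Sum>k<n. \<Sum>l<n. (a i)^2 * (cs ! k * cs ! l * CC (H i) (ts ! k) (ts ! l)))"
      unfolding Qeq by (simp add: sum_distrib_left)
    also have "\<dots> = (\<Sum>k<n. \<Sum>i\<in>{1..N}. \<Sum>l<n. (a i)^2 * (cs ! k * cs ! l * CC (H i) (ts ! k) (ts ! l)))"
      by (rule sum.swap)
    also have "\<dots> = (\<Sum>k<n. \<Sum>l<n. \<Sum>i\<in>{1..N}. (a i)^2 * (cs ! k * cs ! l * CC (H i) (ts ! k) (ts ! l)))"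
      by (rule sum.cong[OF refl]) (rule sum.swap)
    also have "\<dots> = (\<Sum>k<n. \<Sum>l<n. cs ! k * cs ! l * RR N a H (ts ! k) (ts ! l))"
      unfolding RR_def by (intro sum.cong refl) (simp add: sum_distrib_left algebra_simps)
    finally show ?thesis .
  qed
  have "char (distr M borel (\<lambda>\<omega>. \<Sum>k<length ts. cs ! k * msfbm N a B (ts ! k) \<omega>)) \<theta>
      = char (distr M borel (\<lambda>\<omega>. \<Sum>i\<in>{1..N}. Z i \<omega>)) \<theta>"
    unfolding Xeq ..
  also have "\<dots> = (\<Prod>i\<in>{1..N}. char (distr M borel (Z i)) \<theta>)"
    by (rule char_distr_sum[OF indZ])
  also have "\<dots> = (\<Prod>i\<in>{1..N}. complex_of_real (exp (- (Q i * \<theta>\<^sup>2) / 2)))"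
    by (intro prod.cong refl charZ)
  also have "\<dots> = complex_of_real (exp (\<Sum>i\<in>{1..N}. - (Q i * \<theta>\<^sup>2) / 2))"
    by (simp add: exp_sum)
  also have "(\<Sum>i\<in>{1..N}. - (Q i * \<theta>\<^sup>2) / 2) = - ((\<Sum>i\<in>{1..N}. Q i) * \<theta>\<^sup>2) / 2"
    by (simp add: sum_divide_distrib sum_distrib_right sum_negf)
  finally show ?thesis unfolding sumQ n_def .
qed



lemma int_mult_bounded:
  fixes f h :: "'a \<Rightarrow> real"
  assumes "integrable M f" "h \<in> borel_measurable M" "\<And>x. x \<in> space M \<Longrightarrow> \<bar>h x\<bar> \<le> 1"
  shows "integrable M (\<lambda>x. f x * h x)"
proof (rule Bochner_Integration.integrable_bound[OF assms(1)])
  show "(\<lambda>x. f x * h x) \<in> borel_measurable M" using assms borel_measurable_integrable by measurable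
  show "AE x in M. norm (f x * h x) \<le> norm (f x)"
    using assms(3) by (auto simp: abs_mult intro!: mult_left_le)
qed

lemma dd_emeasure:
  fixes h W :: "'a \<Rightarrow> real"
  assumes [measurable]: "h \<in> borel_measurable M" "W \<in> borel_measurable M"
    and nn: "\<And>\<omega>. \<omega> \<in> space M \<Longrightarrow> 0 \<le> h \<omega>" and int: "integrable M h" and B: "B \<in> sets borel"
  shows "emeasure (distr (density M (\<lambda>\<omega>. ennreal (h \<omega>))) borel W) B = ennreal (\<integral>\<omega>. h \<omega> * indicator B (W \<omega>) \<partial>M)"
proof -
  have "emeasure (distr (density M (\<lambda>\<omega>. ennreal (h \<omega>))) borel W) B
      = emeasure (density M (\<lambda>\<omega>. ennreal (h \<omega>))) (W -` B \<inter> space M)"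
    using B by (subst emeasure_distr) auto
  also have "\<dots> = (\<integral>\<^sup>+\<omega>. ennreal (h \<omega>) * indicator (W -` B \<inter> space M) \<omega> \<partial>M)"
    using B by (intro emeasure_density) auto
  also have "\<dots> = (\<integral>\<^sup>+\<omega>. ennreal (h \<omega> * indicator B (W \<omega>)) \<partial>M)"
    by (intro nn_integral_cong) (auto simp: indicator_def)
  also have "\<dots> = ennreal (\<integral>\<omega>. h \<omega> * indicator B (W \<omega>) \<partial>M)"
  proof (rule nn_integral_eq_integral)
    show "integrable M (\<lambda>\<omega>. h \<omega> * indicator B (W \<omega>))"
      using B by (intro int_mult_bounded int) (auto simp: indicator_def)
    show "AE x in M. 0 \<le> h x * indicator B (W x)" using nn by auto
  qed
  finally show ?thesis .
qed

lemma dd_char: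
  fixes h W :: "'a \<Rightarrow> real"
  assumes [measurable]: "h \<in> borel_measurable M" "W \<in> borel_measurable M"
    and nn: "\<And>\<omega>. \<omega> \<in> space M \<Longrightarrow> 0 \<le> h \<omega>" and int: "integrable M h"
  shows "char (distr (density M (\<lambda>\<omega>. ennreal (h \<omega>))) borel W) \<phi>
       = Complex (\<integral>\<omega>. h \<omega> * cos (\<phi> * W \<omega>) \<partial>M) (\<integral>\<omega>. h \<omega> * sin (\<phi> * W \<omega>) \<partial>M)"
proof -
  have "char (distr (density M (\<lambda>\<omega>. ennreal (h \<omega>))) borel W) \<phi>
      = (CLINT \<omega>|density M (\<lambda>\<omega>. ennreal (h \<omega>)). iexp (\<phi> * W \<omega>))"
    unfolding char_def by (subst integral_distr) auto
  also have "\<dots> = (CLINT \<omega>|M. h \<omega> *\<^sub>R iexp (\<phi> * W \<omega>))"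
    using nn by (subst integral_density) auto
  finally have c: "char (distr (density M (\<lambda>\<omega>. ennreal (h \<omega>))) borel W) \<phi> = (CLINT \<omega>|M. h \<omega> *\<^sub>R iexp (\<phi> * W \<omega>))" .
  have ii: "integrable M (\<lambda>\<omega>. h \<omega> *\<^sub>R iexp (\<phi> * W \<omega>))"
  proof (rule Bochner_Integration.integrable_bound[OF int])
    show "(\<lambda>\<omega>. h \<omega> *\<^sub>R iexp (\<phi> * W \<omega>)) \<in> borel_measurable M" by measurable
    show "AE x in M. norm (h x *\<^sub>R iexp (\<phi> * W x)) \<le> norm (h x)"
      by (auto simp: norm_exp_i_times)
  qed
  show ?thesis unfolding c
  proof (rule complex_eqI)
    show "Re (CLINT \<omega>|M. h \<omega> *\<^sub>R iexp (\<phi> * W \<omega>)) = Re (Complex (\<integral>\<omega>. h \<omega> * cos (\<phi> * W \<omega>) \<partial>M) (\<integral>\<omega>. h \<omega> * sin (\<phi> * W \<omega>) \<partial>M))"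
      using integral_Re[OF ii] by (simp add: Re_exp)
    show "Im (CLINT \<omega>|M. h \<omega> *\<^sub>R iexp (\<phi> * W \<omega>)) = Im (Complex (\<integral>\<omega>. h \<omega> * cos (\<phi> * W \<omega>) \<partial>M) (\<integral>\<omega>. h \<omega> * sin (\<phi> * W \<omega>) \<partial>M))"
      using integral_Im[OF ii] by (simp add: Im_exp)
  qed
qed


lemma uniq_fourier:
  fixes M :: "'a measure" and f g W Z :: "'a \<Rightarrow> real"
  assumes P: "prob_space M"
    and [measurable]: "f \<in> borel_measurable M" "g \<in> borel_measurable M" "W \<in> borel_measurable M" "Z \<in> borel_measurable M"
    and fnn: "\<And>\<omega>. \<omega> \<in> space M \<Longrightarrow> 0 \<le> f \<omega>" and gnn: "\<And>\<omega>. \<omega> \<in> space M \<Longrightarrow> 0 \<le> g \<omega>"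
    and fint: "integrable M f" and gint: "integrable M g"
    and hc: "\<And>\<phi>. (\<integral>\<omega>. f \<omega> * cos (\<phi> * W \<omega>) \<partial>M) = (\<integral>\<omega>. g \<omega> * cos (\<phi> * Z \<omega>) \<partial>M)"
    and hs: "\<And>\<phi>. (\<integral>\<omega>. f \<omega> * sin (\<phi> * W \<omega>) \<partial>M) = (\<integral>\<omega>. g \<omega> * sin (\<phi> * Z \<omega>) \<partial>M)"
    and B: "B \<in> sets borel"
  shows "(\<integral>\<omega>. f \<omega> * indicator B (W \<omega>) \<partial>M) = (\<integral>\<omega>. g \<omega> * indicator B (Z \<omega>) \<partial>M)"
proof -
  interpret prob_space M by (rule P)
  define m where "m = (\<integral>\<omega>. f \<omega> \<partial>M)"
  have mg: "m = (\<integral>\<omega>. g \<omega> \<partial>M)" using hc[of 0] by (simp add: m_def)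
  have m0: "0 \<le> m" unfolding m_def using fnn by (intro integral_nonneg_AE) auto
  have ibf: "integrable M (\<lambda>\<omega>. f \<omega> * indicator B (W \<omega>))"
    using B by (intro int_mult_bounded fint) (auto simp: indicator_def)
  have ibg: "integrable M (\<lambda>\<omega>. g \<omega> * indicator B (Z \<omega>))"
    using B by (intro int_mult_bounded gint) (auto simp: indicator_def)
  show ?thesis
  proof (cases "m = 0")
    case True
    have "AE \<omega> in M. f \<omega> = 0"
      using integral_nonneg_eq_0_iff_AE[OF fint] fnn True m_def by auto
    then have z1: "(\<integral>\<omega>. f \<omega> * indicator B (W \<omega>) \<partial>M) = 0"
      by (intro integral_eq_zero_AE) auto
    have "AE \<omega> in M. g \<omega> = 0"
      using integral_nonneg_eq_0_iff_AE[OF gint] gnn True mg by auto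
    then have z2: "(\<integral>\<omega>. g \<omega> * indicator B (Z \<omega>) \<partial>M) = 0"
      by (intro integral_eq_zero_AE) auto
    show ?thesis using z1 z2 by simp
  next
    case False
    then have mp: "0 < m" using m0 by simp
    define f' where "f' \<omega> = f \<omega> / m" for \<omega>
    define g' where "g' \<omega> = g \<omega> / m" for \<omega>
    have [measurable]: "f' \<in> borel_measurable M" "g' \<in> borel_measurable M" unfolding f'_def g'_def by auto
    have f'nn: "\<And>\<omega>. \<omega> \<in> space M \<Longrightarrow> 0 \<le> f' \<omega>" using fnn mp by (simp add: f'_def)
    have g'nn: "\<And>\<omega>. \<omega> \<in> space M \<Longrightarrow> 0 \<le> g' \<omega>" using gnn mp by (simp add: g'_def)
    have f'int: "integrable M f'" unfolding f'_def using fint by simp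
    have g'int: "integrable M g'" unfolding g'_def using gint by simp
    define D1 where "D1 = distr (density M (\<lambda>\<omega>. ennreal (f' \<omega>))) borel W"
    define D2 where "D2 = distr (density M (\<lambda>\<omega>. ennreal (g' \<omega>))) borel Z"
    have e1: "emeasure D1 A = ennreal (\<integral>\<omega>. f' \<omega> * indicator A (W \<omega>) \<partial>M)" if "A \<in> sets borel" for A
      unfolding D1_def by (rule dd_emeasure) (use f'nn f'int that in auto)
    have e2: "emeasure D2 A = ennreal (\<integral>\<omega>. g' \<omega> * indicator A (Z \<omega>) \<partial>M)" if "A \<in> sets borel" for A
      unfolding D2_def by (rule dd_emeasure) (use g'nn g'int that in auto)
    have intf': "(\<integral>\<omega>. f' \<omega> \<partial>M) = 1" using mp by (simp add: f'_def m_def)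
    have intg': "(\<integral>\<omega>. g' \<omega> \<partial>M) = 1" using mp by (simp add: g'_def mg)
    have rd1: "real_distribution D1"
    proof -
      have "emeasure D1 UNIV = 1" using e1[of UNIV] intf' by simp
      then show ?thesis unfolding real_distribution_def real_distribution_axioms_def
        by (auto simp: D1_def intro!: prob_spaceI)
    qed
    have rd2: "real_distribution D2"
    proof -
      have "emeasure D2 UNIV = 1" using e2[of UNIV] intg' by simp
      then show ?thesis unfolding real_distribution_def real_distribution_axioms_def
        by (auto simp: D2_def intro!: prob_spaceI)
    qed
    have "char D1 = char D2"
    proof
      fix \<phi>
      have c1: "char D1 \<phi> = Complex (\<integral>\<omega>. f' \<omega> * cos (\<phi> * W \<omega>) \<partial>M) (\<integral>\<omega>. f' \<omega> * sin (\<phi> * W \<omega>) \<partial>M)"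
        unfolding D1_def by (rule dd_char) (use f'nn f'int in auto)
      have c2: "char D2 \<phi> = Complex (\<integral>\<omega>. g' \<omega> * cos (\<phi> * Z \<omega>) \<partial>M) (\<integral>\<omega>. g' \<omega> * sin (\<phi> * Z \<omega>) \<partial>M)"
        unfolding D2_def by (rule dd_char) (use g'nn g'int in auto)
      have "(\<integral>\<omega>. f' \<omega> * cos (\<phi> * W \<omega>) \<partial>M) = (\<integral>\<omega>. f \<omega> * cos (\<phi> * W \<omega>) \<partial>M) / m"
        unfolding f'_def by (simp add: field_simps)
      moreover have "(\<integral>\<omega>. g' \<omega> * cos (\<phi> * Z \<omega>) \<partial>M) = (\<integral>\<omega>. g \<omega> * cos (\<phi> * Z \<omega>) \<partial>M) / m"
        unfolding g'_def by (simp add: field_simps)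
      moreover have "(\<integral>\<omega>. f' \<omega> * sin (\<phi> * W \<omega>) \<partial>M) = (\<integral>\<omega>. f \<omega> * sin (\<phi> * W \<omega>) \<partial>M) / m"
        unfolding f'_def by (simp add: field_simps)
      moreover have "(\<integral>\<omega>. g' \<omega> * sin (\<phi> * Z \<omega>) \<partial>M) = (\<integral>\<omega>. g \<omega> * sin (\<phi> * Z \<omega>) \<partial>M) / m"
        unfolding g'_def by (simp add: field_simps)
      ultimately show "char D1 \<phi> = char D2 \<phi>" unfolding c1 c2 using hc hs by simp
    qed
    then have "D1 = D2" using Levy_uniqueness rd1 rd2 by blast
    then have "ennreal (\<integral>\<omega>. f' \<omega> * indicator B (W \<omega>) \<partial>M) = ennreal (\<integral>\<omega>. g' \<omega> * indicator B (Z \<omega>) \<partial>M)"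
      using e1[OF B] e2[OF B] by simp
    moreover have "0 \<le> (\<integral>\<omega>. f' \<omega> * indicator B (W \<omega>) \<partial>M)" "0 \<le> (\<integral>\<omega>. g' \<omega> * indicator B (Z \<omega>) \<partial>M)"
      using f'nn g'nn by (auto intro!: integral_nonneg_AE)
    ultimately have "(\<integral>\<omega>. f' \<omega> * indicator B (W \<omega>) \<partial>M) = (\<integral>\<omega>. g' \<omega> * indicator B (Z \<omega>) \<partial>M)"
      by simp
    moreover have "(\<integral>\<omega>. f' \<omega> * indicator B (W \<omega>) \<partial>M) = (\<integral>\<omega>. f \<omega> * indicator B (W \<omega>) \<partial>M) / m"
      unfolding f'_def by (simp add: field_simps)
    moreover have "(\<integral>\<omega>. g' \<omega> * indicator B (Z \<omega>) \<partial>M) = (\<integral>\<omega>. g \<omega> * indicator B (Z \<omega>) \<partial>M) / m"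
      unfolding g'_def by (simp add: field_simps)
    ultimately show ?thesis using mp by simp
  qed
qed

lemma bint:
  fixes h :: "'a \<Rightarrow> real"
  assumes "prob_space M" "h \<in> borel_measurable M" "\<And>\<omega>. \<bar>h \<omega>\<bar> \<le> c"
  shows "integrable M h"
proof -
  interpret prob_space M by fact
  show ?thesis using assms by (intro integrable_const_bound[where B=c]) auto
qed

lemma int_lin3:
  fixes u v w :: "'a \<Rightarrow> real"
  assumes "integrable M u" "integrable M v" "integrable M w"
  shows "(\<integral>\<omega>. u \<omega> + c1 * v \<omega> + c2 * w \<omega> \<partial>M) = (\<integral>\<omega>. u \<omega> \<partial>M) + c1 * (\<integral>\<omega>. v \<omega> \<partial>M) + c2 * (\<integral>\<omega>. w \<omega> \<partial>M)"
  using assms by simp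

lemma gauss_pair_indep:
  fixes M :: "'a measure" and V W :: "'a \<Rightarrow> real"
  assumes P: "prob_space M" and [measurable]: "V \<in> borel_measurable M" "W \<in> borel_measurable M"
    and hc: "\<And>\<alpha> \<beta>. (\<integral>\<omega>. cos (\<alpha> * V \<omega> + \<beta> * W \<omega>) \<partial>M) = exp (- (\<alpha>^2 * p + \<beta>^2 * q) / 2)"
    and hs: "\<And>\<alpha> \<beta>. (\<integral>\<omega>. sin (\<alpha> * V \<omega> + \<beta> * W \<omega>) \<partial>M) = 0"
    and C: "C \<in> sets borel" and B: "B \<in> sets borel"
  shows "(\<integral>\<omega>. indicator C (V \<omega>) * indicator B (W \<omega>) \<partial>M)
       = (\<integral>\<omega>. indicator C (V \<omega>) \<partial>M) * (\<integral>\<omega>. indicator B (W \<omega>) \<partial>M :: real)"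
proof -
  interpret prob_space M by (rule P)
  define eV where "eV \<theta> = exp (- (\<theta>^2 * p) / 2)" for \<theta>
  define eW where "eW \<phi> = exp (- (\<phi>^2 * q) / 2)" for \<phi>
  have cVW: "(\<integral>\<omega>. cos (\<theta> * V \<omega> + \<phi> * W \<omega>) \<partial>M) = eV \<theta> * eW \<phi>" for \<theta> \<phi>
    unfolding hc eV_def eW_def by (simp add: exp_add[symmetric] field_simps)
  have cW: "(\<integral>\<omega>. cos (\<phi> * W \<omega>) \<partial>M) = eW \<phi>" for \<phi>
    using hc[of 0 \<phi>] by (simp add: eW_def)
  have cV: "(\<integral>\<omega>. cos (\<theta> * V \<omega>) \<partial>M) = eV \<theta>" for \<theta>
    using hc[of \<theta> 0] by (simp add: eV_def)
  have sW: "(\<integral>\<omega>. sin (\<phi> * W \<omega>) \<partial>M) = 0" for \<phi>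
    using hs[of 0 \<phi>] by simp
  have sV: "(\<integral>\<omega>. sin (\<theta> * V \<omega>) \<partial>M) = 0" for \<theta>
    using hs[of \<theta> 0] by simp
  have eWm: "eW (- \<phi>) = eW \<phi>" for \<phi> by (simp add: eW_def)
  have ic: "integrable M (\<lambda>\<omega>. cos (\<theta> * V \<omega> + \<phi> * W \<omega>))" for \<theta> \<phi>
    by (rule bint[OF P, where c=1]) auto
  have is': "integrable M (\<lambda>\<omega>. sin (\<theta> * V \<omega> + \<phi> * W \<omega>))" for \<theta> \<phi>
    by (rule bint[OF P, where c=1]) auto
  have icW: "integrable M (\<lambda>\<omega>. cos (\<phi> * W \<omega>))" "integrable M (\<lambda>\<omega>. sin (\<phi> * W \<omega>))" for \<phi>
    by (rule bint[OF P, where c=1]; simp)+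
  have icV: "integrable M (\<lambda>\<omega>. cos (\<phi> * V \<omega>))" "integrable M (\<lambda>\<omega>. sin (\<phi> * V \<omega>))" for \<phi>
    by (rule bint[OF P, where c=1]; simp)+
  have c2: "\<bar>1 + cos y\<bar> \<le> 2" "\<bar>1 + sin y\<bar> \<le> 2" for y :: real
    using abs_triangle_ineq[of 1 "cos y"] abs_cos_le_one[of y] abs_triangle_ineq[of 1 "sin y"] abs_sin_le_one[of y]
    by linarith+
  define pB where "pB = (\<integral>\<omega>. indicator B (W \<omega>) \<partial>M :: real)"
  have A4: "(\<integral>\<omega>. cos (\<theta> * V \<omega>) * indicator B (W \<omega>) \<partial>M) = eV \<theta> * pB" for \<theta>
  proof -
    have "(\<integral>\<omega>. (1 + cos (\<theta> * V \<omega>)) * indicator B (W \<omega>) \<partial>M) = (\<integral>\<omega>. (1 + eV \<theta>) * indicator B (W \<omega>) \<partial>M)"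
    proof (rule uniq_fourier[OF P _ _ _ _ _ _ _ _ _ _ B])
      show "integrable M (\<lambda>\<omega>. 1 + cos (\<theta> * V \<omega>))" by (rule bint[OF P, where c=2]) (auto simp: c2)
      show "integrable M (\<lambda>\<omega>. 1 + eV \<theta>)" by simp
      show "0 \<le> 1 + cos (\<theta> * V \<omega>)" for \<omega> using cos_ge_minus_one[of "\<theta> * V \<omega>"] by linarith
      show "0 \<le> 1 + eV \<theta>" by (simp add: eV_def add_nonneg_nonneg)
      fix \<phi>
      have "(\<integral>\<omega>. (1 + cos (\<theta> * V \<omega>)) * cos (\<phi> * W \<omega>) \<partial>M)
          = (\<integral>\<omega>. cos (\<phi> * W \<omega>) + 1/2 * cos (\<theta> * V \<omega> + \<phi> * W \<omega>) + 1/2 * cos (\<theta> * V \<omega> + (-\<phi>) * W \<omega>) \<partial>M)"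
        by (intro Bochner_Integration.integral_cong refl) (simp add: algebra_simps cos_add cos_diff sin_add sin_diff)
      also have "\<dots> = (1 + eV \<theta>) * eW \<phi>"
        apply (subst int_lin3[OF icW(1) ic ic]) apply (simp only: cW cVW eWm) apply (simp_all add: algebra_simps) done
      also have "\<dots> = (\<integral>\<omega>. (1 + eV \<theta>) * cos (\<phi> * W \<omega>) \<partial>M)" by (simp add: cW)
      finally show "(\<integral>\<omega>. (1 + cos (\<theta> * V \<omega>)) * cos (\<phi> * W \<omega>) \<partial>M) = (\<integral>\<omega>. (1 + eV \<theta>) * cos (\<phi> * W \<omega>) \<partial>M)" .
      have "(\<integral>\<omega>. (1 + cos (\<theta> * V \<omega>)) * sin (\<phi> * W \<omega>) \<partial>M)
          = (\<integral>\<omega>. sin (\<phi> * W \<omega>) + 1/2 * sin (\<theta> * V \<omega> + \<phi> * W \<omega>) + (-1/2) * sin (\<theta> * V \<omega> + (-\<phi>) * W \<omega>) \<partial>M)"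
        by (intro Bochner_Integration.integral_cong refl) (simp add: algebra_simps cos_add cos_diff sin_add sin_diff)
      also have "\<dots> = 0"
        apply (subst int_lin3[OF icW(2) is' is']) apply (simp only: sW hs) done
      also have "\<dots> = (\<integral>\<omega>. (1 + eV \<theta>) * sin (\<phi> * W \<omega>) \<partial>M)" by (simp add: sW)
      finally show "(\<integral>\<omega>. (1 + cos (\<theta> * V \<omega>)) * sin (\<phi> * W \<omega>) \<partial>M) = (\<integral>\<omega>. (1 + eV \<theta>) * sin (\<phi> * W \<omega>) \<partial>M)" .
    qed auto
    moreover have "integrable M (\<lambda>\<omega>. indicator B (W \<omega>) :: real)" by (rule bint[OF P, where c=1]) (use B in auto)
    moreover have "integrable M (\<lambda>\<omega>. cos (\<theta> * V \<omega>) * indicator B (W \<omega>))" by (rule bint[OF P, where c=1]) (use B in \<open>auto simp: indicator_def\<close>)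
    ultimately show ?thesis by (simp add: distrib_right pB_def)
  qed
  have B4: "(\<integral>\<omega>. sin (\<theta> * V \<omega>) * indicator B (W \<omega>) \<partial>M) = 0" for \<theta>
  proof -
    have "(\<integral>\<omega>. (1 + sin (\<theta> * V \<omega>)) * indicator B (W \<omega>) \<partial>M) = (\<integral>\<omega>. 1 * indicator B (W \<omega>) \<partial>M)"
    proof (rule uniq_fourier[OF P _ _ _ _ _ _ _ _ _ _ B])
      show "integrable M (\<lambda>\<omega>. 1 + sin (\<theta> * V \<omega>))" by (rule bint[OF P, where c=2]) (auto simp: c2)
      show "integrable M (\<lambda>\<omega>. 1::real)" by simp
      show "0 \<le> 1 + sin (\<theta> * V \<omega>)" for \<omega> using sin_ge_minus_one[of "\<theta> * V \<omega>"] by linarith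
      fix \<phi>
      have "(\<integral>\<omega>. (1 + sin (\<theta> * V \<omega>)) * cos (\<phi> * W \<omega>) \<partial>M)
          = (\<integral>\<omega>. cos (\<phi> * W \<omega>) + 1/2 * sin (\<theta> * V \<omega> + \<phi> * W \<omega>) + 1/2 * sin (\<theta> * V \<omega> + (-\<phi>) * W \<omega>) \<partial>M)"
        by (intro Bochner_Integration.integral_cong refl) (simp add: algebra_simps cos_add cos_diff sin_add sin_diff)
      also have "\<dots> = eW \<phi>"
        apply (subst int_lin3[OF icW(1) is' is']) apply (simp only: cW hs) done
      also have "\<dots> = (\<integral>\<omega>. 1 * cos (\<phi> * W \<omega>) \<partial>M)" by (simp add: cW)
      finally show "(\<integral>\<omega>. (1 + sin (\<theta> * V \<omega>)) * cos (\<phi> * W \<omega>) \<partial>M) = (\<integral>\<omega>. 1 * cos (\<phi> * W \<omega>) \<partial>M)" .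
      have "(\<integral>\<omega>. (1 + sin (\<theta> * V \<omega>)) * sin (\<phi> * W \<omega>) \<partial>M)
          = (\<integral>\<omega>. sin (\<phi> * W \<omega>) + 1/2 * cos (\<theta> * V \<omega> + (-\<phi>) * W \<omega>) + (-1/2) * cos (\<theta> * V \<omega> + \<phi> * W \<omega>) \<partial>M)"
        by (intro Bochner_Integration.integral_cong refl) (simp add: algebra_simps cos_add cos_diff sin_add sin_diff)
      also have "\<dots> = 0"
        apply (subst int_lin3[OF icW(2) ic ic]) apply (simp only: sW cVW eWm) done
      also have "\<dots> = (\<integral>\<omega>. 1 * sin (\<phi> * W \<omega>) \<partial>M)" by (simp add: sW)
      finally show "(\<integral>\<omega>. (1 + sin (\<theta> * V \<omega>)) * sin (\<phi> * W \<omega>) \<partial>M) = (\<integral>\<omega>. 1 * sin (\<phi> * W \<omega>) \<partial>M)" .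
    qed auto
    moreover have "integrable M (\<lambda>\<omega>. indicator B (W \<omega>) :: real)" by (rule bint[OF P, where c=1]) (use B in auto)
    moreover have "integrable M (\<lambda>\<omega>. sin (\<theta> * V \<omega>) * indicator B (W \<omega>))" by (rule bint[OF P, where c=1]) (use B in \<open>auto simp: indicator_def\<close>)
    ultimately show ?thesis by (simp add: distrib_right)
  qed
  have "(\<integral>\<omega>. indicator B (W \<omega>) * indicator C (V \<omega>) \<partial>M) = (\<integral>\<omega>. pB * indicator C (V \<omega>) \<partial>M)"
  proof (rule uniq_fourier[OF P _ _ _ _ _ _ _ _ _ _ C])
    show "integrable M (\<lambda>\<omega>. indicator B (W \<omega>) :: real)" by (rule bint[OF P, where c=1]) (use B in auto)
    show "integrable M (\<lambda>\<omega>. pB)" by simp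
    show "0 \<le> pB" unfolding pB_def by (intro integral_nonneg_AE) auto
    fix \<phi>
    show "(\<integral>\<omega>. indicator B (W \<omega>) * cos (\<phi> * V \<omega>) \<partial>M) = (\<integral>\<omega>. pB * cos (\<phi> * V \<omega>) \<partial>M)"
      using A4[of \<phi>] cV[of \<phi>] by (simp add: mult.commute)
    show "(\<integral>\<omega>. indicator B (W \<omega>) * sin (\<phi> * V \<omega>) \<partial>M) = (\<integral>\<omega>. pB * sin (\<phi> * V \<omega>) \<partial>M)"
      using B4[of \<phi>] sV[of \<phi>] by (simp add: mult.commute)
  qed (use B in auto)
  then show ?thesis by (simp add: mult.commute pB_def)
qed



lemma gen_sigma_sets:
  assumes "V \<in> space M \<rightarrow> UNIV"
  shows "sets (gen_sigma M V) = {V -` C \<inter> space M | C. C \<in> sets borel}"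
proof -
  have "gen_sigma M V = vimage_algebra (space M) V borel"
    unfolding gen_sigma_def vimage_algebra_def ..
  then show ?thesis using sets_vimage_algebra2[of V "space M" borel] by simp
qed

lemma gen_sigma_space: "space (gen_sigma M V) = space M"
  unfolding gen_sigma_def by (rule space_measure_of) auto

lemma sfs_of_prob:
  assumes "prob_space M" "subalgebra M F"
  shows "sigma_finite_subalgebra M F"
proof -
  interpret prob_space M by fact
  have "finite_measure_subalgebra M F"
    unfolding finite_measure_subalgebra_def finite_measure_subalgebra_axioms_def
    using assms(2) by (simp add: finite_measure_axioms)
  then show ?thesis by (rule finite_measure_subalgebra_is_sigma_finite)
qed

lemma markov_core:
  fixes M F :: "'a measure" and V W Y :: "'a \<Rightarrow> real"
  assumes P: "prob_space M" and subF: "subalgebra M F"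
    and [measurable]: "V \<in> borel_measurable M" "W \<in> borel_measurable M" "Y \<in> borel_measurable M"
    and WF: "W \<in> borel_measurable F"
    and indVW: "\<And>C B. C \<in> sets borel \<Longrightarrow> B \<in> sets borel \<Longrightarrow>
        (\<integral>\<omega>. indicator C (V \<omega>) * indicator B (W \<omega>) \<partial>M)
       = (\<integral>\<omega>. indicator C (V \<omega>) \<partial>M) * (\<integral>\<omega>. indicator B (W \<omega>) \<partial>M :: real)"
    and mk: "\<And>A. A \<in> sets borel \<Longrightarrow> AE \<omega> in M. real_cond_exp M F (\<lambda>\<omega>. indicator A (Y \<omega>)) \<omega>
              = real_cond_exp M (gen_sigma M V) (\<lambda>\<omega>. indicator A (Y \<omega>)) \<omega>"
    and A: "A \<in> sets borel" and B: "B \<in> sets borel"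
  shows "(\<integral>\<omega>. indicator A (Y \<omega>) * indicator B (W \<omega>) \<partial>M)
       = (\<integral>\<omega>. indicator A (Y \<omega>) \<partial>M) * (\<integral>\<omega>. indicator B (W \<omega>) \<partial>M :: real)"
proof -
  interpret prob_space M by (rule P)
  define G where "G = gen_sigma M V"
  have sG: "sets G = {V -` C \<inter> space M | C. C \<in> sets borel}"
    unfolding G_def by (rule gen_sigma_sets) auto
  have subG: "subalgebra M G"
    unfolding subalgebra_def using sG by (auto simp: G_def gen_sigma_space)
  have sfF: "sigma_finite_subalgebra M F" by (rule sfs_of_prob[OF P subF])
  have sfG: "sigma_finite_subalgebra M G" by (rule sfs_of_prob[OF P subG])
  define fA where "fA \<omega> = (indicator A (Y \<omega>) :: real)" for \<omega>
  define gB where "gB \<omega> = (indicator B (W \<omega>) :: real)" for \<omega>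
  define pB where "pB = (\<integral>\<omega>. gB \<omega> \<partial>M)"
  have [measurable]: "fA \<in> borel_measurable M" "gB \<in> borel_measurable M"
    unfolding fA_def gB_def using A B by auto
  have gBF: "gB \<in> borel_measurable F" unfolding gB_def using B WF by measurable
  have ifA: "integrable M fA" unfolding fA_def by (rule bint[OF P, where c=1]) (use A in auto)
  have igB: "integrable M gB" unfolding gB_def by (rule bint[OF P, where c=1]) (use B in auto)
  have bgB: "\<bar>gB \<omega>\<bar> \<le> 1" for \<omega> by (simp add: gB_def)
  have "(\<integral>\<omega>. gB \<omega> * fA \<omega> \<partial>M) = (\<integral>\<omega>. gB \<omega> * real_cond_exp M F fA \<omega> \<partial>M)"
  proof (rule sigma_finite_subalgebra.real_cond_exp_intg(2)[OF sfF, symmetric])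
    have m1: "(\<lambda>\<omega>. gB \<omega> * fA \<omega>) \<in> borel_measurable M" by simp
    show "integrable M (\<lambda>\<omega>. gB \<omega> * fA \<omega>)" by (rule bint[OF P m1, where c=1]) (auto simp: gB_def fA_def indicator_def)
  qed (use gBF in auto)
  also have "\<dots> = (\<integral>\<omega>. gB \<omega> * real_cond_exp M G fA \<omega> \<partial>M)"
  proof (rule integral_cong_AE)
    show "AE \<omega> in M. gB \<omega> * real_cond_exp M F fA \<omega> = gB \<omega> * real_cond_exp M G fA \<omega>"
      using mk[OF A] unfolding fA_def G_def by auto
  qed auto
  also have "\<dots> = (\<integral>\<omega>. real_cond_exp M G fA \<omega> * gB \<omega> \<partial>M)" by (simp add: mult.commute)
  also have "\<dots> = (\<integral>\<omega>. real_cond_exp M G fA \<omega> * real_cond_exp M G gB \<omega> \<partial>M)"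
  proof (rule sigma_finite_subalgebra.real_cond_exp_intg(2)[OF sfG, symmetric])
    show "integrable M (\<lambda>\<omega>. real_cond_exp M G fA \<omega> * gB \<omega>)"
      by (rule int_mult_bounded[OF sigma_finite_subalgebra.real_cond_exp_int(1)[OF sfG ifA]]) (auto simp: bgB)
  qed auto
  also have "\<dots> = (\<integral>\<omega>. real_cond_exp M G fA \<omega> * pB \<partial>M)"
  proof (rule integral_cong_AE)
    have "AE \<omega> in M. real_cond_exp M G gB \<omega> = pB"
    proof (rule sigma_finite_subalgebra.real_cond_exp_charact[OF sfG])
      fix S assume "S \<in> sets G"
      then obtain C where C: "C \<in> sets borel" and S: "S = V -` C \<inter> space M" using sG by auto
      have iS: "indicator S \<omega> = (indicator C (V \<omega>) :: real)" if "\<omega> \<in> space M" for \<omega>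
        using that S by (auto simp: indicator_def)
      have "(\<integral>\<omega>\<in>S. gB \<omega> \<partial>M) = (\<integral>\<omega>. indicator C (V \<omega>) * indicator B (W \<omega>) \<partial>M)"
        unfolding set_lebesgue_integral_def
        by (intro Bochner_Integration.integral_cong refl) (simp add: iS gB_def)
      also have "\<dots> = (\<integral>\<omega>. indicator C (V \<omega>) \<partial>M) * pB"
        using indVW[OF C B] by (simp add: pB_def gB_def)
      also have "\<dots> = (\<integral>\<omega>\<in>S. pB \<partial>M)"
        unfolding set_lebesgue_integral_def
        by (subst Bochner_Integration.integral_cong[OF refl, where g="\<lambda>\<omega>. indicator C (V \<omega>) * pB"]) (simp_all add: iS)
      finally show "(\<integral>\<omega>\<in>S. gB \<omega> \<partial>M) = (\<integral>\<omega>\<in>S. pB \<partial>M)" .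
    qed (use igB in auto)
    then show "AE \<omega> in M. real_cond_exp M G fA \<omega> * real_cond_exp M G gB \<omega> = real_cond_exp M G fA \<omega> * pB"
      by auto
  qed auto
  also have "\<dots> = (\<integral>\<omega>. real_cond_exp M G fA \<omega> \<partial>M) * pB" by simp
  also have "\<dots> = (\<integral>\<omega>. fA \<omega> \<partial>M) * pB"
    using sigma_finite_subalgebra.real_cond_exp_int(2)[OF sfG ifA] by simp
  finally show ?thesis by (simp add: fA_def gB_def pB_def mult.commute)
qed

lemma indep_from_prod:
  fixes M :: "'a measure" and Y W :: "'a \<Rightarrow> real"
  assumes P: "prob_space M" and [measurable]: "Y \<in> borel_measurable M" "W \<in> borel_measurable M"
    and hp: "\<And>A B. A \<in> sets borel \<Longrightarrow> B \<in> sets borel \<Longrightarrow>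
        (\<integral>\<omega>. indicator A (Y \<omega>) * indicator B (W \<omega>) \<partial>M)
       = (\<integral>\<omega>. indicator A (Y \<omega>) \<partial>M) * (\<integral>\<omega>. indicator B (W \<omega>) \<partial>M :: real)"
  shows "prob_space.indep_var M borel Y borel W"
proof -
  interpret prob_space M by (rule P)
  have ss: "sigma_sets (space M) {X -` A \<inter> space M | A. A \<in> sets borel} = {X -` A \<inter> space M | A. A \<in> sets borel}"
    for X :: "'a \<Rightarrow> real"
  proof -
    have e: "{X -` A \<inter> space M | A. A \<in> sigma_sets UNIV (sets borel)} = sigma_sets (space M) {X -` A \<inter> space M | A. A \<in> sets borel}"
      by (rule sigma_sets_vimage_commute) simp
    have u: "sigma_sets UNIV (sets borel) = sets (borel :: real measure)"
      using sets.sigma_sets_eq[of "borel :: real measure"] by simp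
    show ?thesis using e unfolding u by (rule sym)
  qed
  have mi: "measure M (X -` A \<inter> space M) = (\<integral>\<omega>. indicator A (X \<omega>) \<partial>M)"
    if [measurable]: "X \<in> borel_measurable M" and A: "A \<in> sets borel" for X :: "'a \<Rightarrow> real" and A
  proof -
    have "measure M (X -` A \<inter> space M) = (\<integral>\<omega>. indicator (X -` A \<inter> space M) \<omega> \<partial>M)"
      using A by simp
    also have "\<dots> = (\<integral>\<omega>. indicator A (X \<omega>) \<partial>M)"
      by (intro Bochner_Integration.integral_cong refl) (auto simp: indicator_def)
    finally show ?thesis .
  qed
  show ?thesis unfolding indep_var_eq ss indep_sets2_eq
  proof (intro conjI ballI)
    fix a b assume "a \<in> {Y -` A \<inter> space M | A. A \<in> sets borel}" "b \<in> {W -` A \<inter> space M | A. A \<in> sets borel}"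
    then obtain A B where A: "A \<in> sets borel" "a = Y -` A \<inter> space M" and B: "B \<in> sets borel" "b = W -` B \<inter> space M"
      by auto
    have "measure M (a \<inter> b) = (\<integral>\<omega>. indicator (a \<inter> b) \<omega> \<partial>M)"
      using A B by simp
    also have "\<dots> = (\<integral>\<omega>. indicator A (Y \<omega>) * indicator B (W \<omega>) \<partial>M)"
      by (intro Bochner_Integration.integral_cong refl) (auto simp: indicator_def A B)
    also have "\<dots> = measure M a * measure M b"
      using hp[OF A(1) B(1)] mi[of Y A] mi[of W B] A B by simp
    finally show "prob (a \<inter> b) = prob a * prob b" .
  qed auto
qed



lemma gauss3:
  fixes M :: "'a measure" and N :: nat and a H :: "nat \<Rightarrow> real"
    and B :: "nat \<Rightarrow> real \<Rightarrow> 'a \<Rightarrow> real"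
  assumes P: "prob_space M"
    and fbm: "\<forall>i\<in>{1..N}. is_fbm M (H i) (B i)"
    and ind: "prob_space.indep_vars M (\<lambda>_. Pi\<^sub>M UNIV (\<lambda>_. borel)) (\<lambda>i \<omega>. \<lambda>t. B i t \<omega>) {1..N}"
  shows "char (distr M borel (\<lambda>\<omega>. \<alpha> * msfbm N a B r \<omega> + \<beta> * msfbm N a B s \<omega> + \<gamma> * msfbm N a B t \<omega>)) \<theta>
     = complex_of_real (exp (- ((\<alpha>^2 * RR N a H r r + \<beta>^2 * RR N a H s s + \<gamma>^2 * RR N a H t t
          + 2*\<alpha>*\<beta>*RR N a H r s + 2*\<alpha>*\<gamma>*RR N a H r t + 2*\<beta>*\<gamma>*RR N a H s t) * \<theta>^2) / 2))"
proof -
  have g: "char (distr M borel (\<lambda>\<omega>. \<Sum>k<length [r,s,t]. [\<alpha>,\<beta>,\<gamma>] ! k * msfbm N a B ([r,s,t] ! k) \<omega>)) \<theta>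
        = complex_of_real (exp (- ((\<Sum>k<length [r,s,t]. \<Sum>l<length [r,s,t].
              [\<alpha>,\<beta>,\<gamma>] ! k * [\<alpha>,\<beta>,\<gamma>] ! l * RR N a H ([r,s,t] ! k) ([r,s,t] ! l)) * \<theta>\<^sup>2) / 2))"
    by (rule gauss_msfbm[OF P fbm ind]) simp
  have f: "(\<lambda>\<omega>. \<Sum>k<length [r,s,t]. [\<alpha>,\<beta>,\<gamma>] ! k * msfbm N a B ([r,s,t] ! k) \<omega>)
      = (\<lambda>\<omega>. \<alpha> * msfbm N a B r \<omega> + \<beta> * msfbm N a B s \<omega> + \<gamma> * msfbm N a B t \<omega>)"
    by (simp add: numeral_3_eq_3)
  have q: "(\<Sum>k<length [r,s,t]. \<Sum>l<length [r,s,t].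
              [\<alpha>,\<beta>,\<gamma>] ! k * [\<alpha>,\<beta>,\<gamma>] ! l * RR N a H ([r,s,t] ! k) ([r,s,t] ! l))
      = \<alpha>^2 * RR N a H r r + \<beta>^2 * RR N a H s s + \<gamma>^2 * RR N a H t t
          + 2*\<alpha>*\<beta>*RR N a H r s + 2*\<alpha>*\<gamma>*RR N a H r t + 2*\<beta>*\<gamma>*RR N a H s t"
    by (simp add: numeral_3_eq_3 RR_sym[of N a H s r] RR_sym[of N a H t r] RR_sym[of N a H t s]
        power2_eq_square algebra_simps)
  show ?thesis using g unfolding f q .
qed

lemma char_real:
  fixes M :: "'a measure" and Z :: "'a \<Rightarrow> real"
  assumes "Z \<in> borel_measurable M" "char (distr M borel Z) \<theta> = complex_of_real c" and P: "prob_space M"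
  shows "(\<integral>\<omega>. cos (\<theta> * Z \<omega>) \<partial>M) = c" "(\<integral>\<omega>. sin (\<theta> * Z \<omega>) \<partial>M) = 0"
proof -
  have "char (distr (density M (\<lambda>\<omega>. ennreal 1)) borel Z) \<theta>
      = Complex (\<integral>\<omega>. 1 * cos (\<theta> * Z \<omega>) \<partial>M) (\<integral>\<omega>. 1 * sin (\<theta> * Z \<omega>) \<partial>M)"
    by (rule dd_char) (use assms bint[OF P, of "\<lambda>_. 1" 1] in auto)
  moreover have "density M (\<lambda>\<omega>. ennreal 1) = M" by (simp add: density_1)
  ultimately have "complex_of_real c = Complex (\<integral>\<omega>. cos (\<theta> * Z \<omega>) \<partial>M) (\<integral>\<omega>. sin (\<theta> * Z \<omega>) \<partial>M)"
    using assms(2) by simp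
  then show "(\<integral>\<omega>. cos (\<theta> * Z \<omega>) \<partial>M) = c" "(\<integral>\<omega>. sin (\<theta> * Z \<omega>) \<partial>M) = 0"
    by (simp_all add: complex_eq_iff)
qed


theorem lemma4:
  fixes M :: "'a measure" and N :: nat and a H :: "nat \<Rightarrow> real"
    and B :: "nat \<Rightarrow> real \<Rightarrow> 'a \<Rightarrow> real"
  assumes "prob_space M"
    and "N \<ge> 1"
    and "\<forall>i\<in>{1..N}. 0 < H i \<and> H i < 1"
    and "\<exists>i\<in>{1..N}. a i \<noteq> 0"
    and "\<exists>j\<in>{1..N}. a j \<noteq> 0 \<and> H j \<noteq> 1/2"
    and "\<forall>i\<in>{1..N}. is_fbm M (H i) (B i)"
    and "prob_space.indep_vars M (\<lambda>_. Pi\<^sub>M UNIV (\<lambda>_. borel)) (\<lambda>i \<omega>. \<lambda>t. B i t \<omega>) {1..N}"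
  shows "\<not> markov_process M {0..} (msfbm N a B)"
proof
  assume mp: "markov_process M {0..} (msfbm N a B)"
  note P = assms(1)
  interpret prob_space M by (rule P)
  obtain r s t where rst: "0 < r" "r < s" "s < t" "RR N a H s s \<noteq> 0"
      "RR N a H t r * RR N a H s s \<noteq> RR N a H r s * RR N a H t s"
    using cov_not_markov[OF assms(3) assms(5)] by blast
  define X where "X = msfbm N a B"
  have Xm[measurable]: "X u \<in> borel_measurable M" for u
  proof -
    have "(\<lambda>\<omega>. a i * sfbm (B i) u \<omega>) \<in> borel_measurable M" if i: "i \<in> {1..N}" for i
    proof -
      have [measurable]: "B i u \<in> borel_measurable M" "B i (-u) \<in> borel_measurable M"
        using fbm_meas assms(6) i by blast+
      show ?thesis unfolding sfbm_def by measurable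
    qed
    then show ?thesis unfolding X_def msfbm_def by (intro borel_measurable_sum) auto
  qed
  have gX: "char (distr M borel (\<lambda>\<omega>. \<alpha> * X r \<omega> + \<beta> * X s \<omega> + \<gamma> * X t \<omega>)) \<theta>
     = complex_of_real (exp (- ((\<alpha>^2 * RR N a H r r + \<beta>^2 * RR N a H s s + \<gamma>^2 * RR N a H t t
          + 2*\<alpha>*\<beta>*RR N a H r s + 2*\<alpha>*\<gamma>*RR N a H r t + 2*\<beta>*\<gamma>*RR N a H s t) * \<theta>^2) / 2))" for \<alpha> \<beta> \<gamma> \<theta>
    unfolding X_def by (rule gauss3[OF P assms(6) assms(7)])
  define d where "d = RR N a H r s / RR N a H s s"
  have rs_eq: "RR N a H r s = d * RR N a H s s" using rst(4) by (simp add: d_def)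
  define V where "V = X s"
  define W where "W \<omega> = X r \<omega> - d * X s \<omega>" for \<omega>
  define Y where "Y = X t"
  have [measurable]: "V \<in> borel_measurable M" "W \<in> borel_measurable M" "Y \<in> borel_measurable M"
    unfolding V_def W_def Y_def by auto
  have cs: "(\<integral>\<omega>. cos (\<alpha> * V \<omega> + \<beta> * W \<omega>) \<partial>M) = exp (- (\<alpha>^2 * RR N a H s s + \<beta>^2 * (RR N a H r r - d * RR N a H r s)) / 2)
      \<and> (\<integral>\<omega>. sin (\<alpha> * V \<omega> + \<beta> * W \<omega>) \<partial>M) = 0" for \<alpha> \<beta>
  proof -
    have eqf: "\<alpha> * V \<omega> + \<beta> * W \<omega> = \<beta> * X r \<omega> + (\<alpha> - \<beta>*d) * X s \<omega>" for \<omega>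
      by (simp add: V_def W_def algebra_simps)
    have m: "(\<lambda>\<omega>. \<beta> * X r \<omega> + (\<alpha> - \<beta>*d) * X s \<omega> + 0 * X t \<omega>) \<in> borel_measurable M" by measurable
    note cr = char_real[OF m gX[of \<beta> "\<alpha> - \<beta>*d" 0 1] P]
    have Q: "(\<beta>^2 * RR N a H r r + (\<alpha> - \<beta>*d)^2 * RR N a H s s + 0^2 * RR N a H t t
          + 2*\<beta>*(\<alpha> - \<beta>*d)*RR N a H r s + 2*\<beta>*0*RR N a H r t + 2*(\<alpha> - \<beta>*d)*0*RR N a H s t) * 1^2
        = \<alpha>^2 * RR N a H s s + \<beta>^2 * (RR N a H r r - d * RR N a H r s)"
      unfolding rs_eq by (simp add: power2_eq_square algebra_simps)
    show ?thesis using cr unfolding Q by (simp add: eqf)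
  qed
  have indVW: "(\<integral>\<omega>. indicator C (V \<omega>) * indicator B' (W \<omega>) \<partial>M)
       = (\<integral>\<omega>. indicator C (V \<omega>) \<partial>M) * (\<integral>\<omega>. indicator B' (W \<omega>) \<partial>M :: real)"
    if "C \<in> sets borel" "B' \<in> sets borel" for C B'
    by (rule gauss_pair_indep[OF P _ _ _ _ that]) (use cs in auto)
  define F where "F = natural_filtration M {0..} X s"
  define G0 where "G0 = {X u -` A \<inter> space M | u A. u \<in> {0..} \<and> u \<le> s \<and> A \<in> sets borel}"
  have G0p: "G0 \<subseteq> Pow (space M)" unfolding G0_def by auto
  have sF: "sets F = sigma_sets (space M) G0" and spF: "space F = space M"
    unfolding F_def natural_filtration_def G0_def[symmetric] using G0p by (simp_all add: sets_measure_of space_measure_of)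
  have G0M: "G0 \<subseteq> sets M" unfolding G0_def by auto
  have subF: "subalgebra M F"
    unfolding subalgebra_def sF spF using sets.sigma_sets_subset[OF G0M] by simp
  have XF: "X u \<in> borel_measurable F" if "0 \<le> u" "u \<le> s" for u
  proof (rule measurableI)
    fix A :: "real set" assume "A \<in> sets borel"
    then have "X u -` A \<inter> space M \<in> G0" unfolding G0_def using that by auto
    then show "X u -` A \<inter> space F \<in> sets F" unfolding sF spF by auto
  qed auto
  have WF: "W \<in> borel_measurable F"
  proof -
    have [measurable]: "X r \<in> borel_measurable F" "X s \<in> borel_measurable F" using XF rst by auto
    show ?thesis unfolding W_def by measurable
  qed
  have mk: "AE \<omega> in M. real_cond_exp M F (\<lambda>\<omega>. indicator A (Y \<omega>)) \<omega>
              = real_cond_exp M (gen_sigma M V) (\<lambda>\<omega>. indicator A (Y \<omega>)) \<omega>" if "A \<in> sets borel" for A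
    using mp that rst unfolding markov_process_def F_def V_def Y_def X_def by auto
  have hp: "(\<integral>\<omega>. indicator A (Y \<omega>) * indicator B' (W \<omega>) \<partial>M)
       = (\<integral>\<omega>. indicator A (Y \<omega>) \<partial>M) * (\<integral>\<omega>. indicator B' (W \<omega>) \<partial>M :: real)"
    if "A \<in> sets borel" "B' \<in> sets borel" for A B'
    by (rule markov_core[OF P subF _ _ _ WF indVW mk that]) auto
  have ind: "indep_var borel Y borel W" by (rule indep_from_prod[OF P _ _ hp]) auto
  have cadd: "char (distr M borel (\<lambda>\<omega>. Y \<omega> + W \<omega>)) 1 = char (distr M borel Y) 1 * char (distr M borel W) 1"
    by (rule char_distr_add[OF ind])
  have e1: "(\<lambda>\<omega>. Y \<omega> + W \<omega>) = (\<lambda>\<omega>. 1 * X r \<omega> + (-d) * X s \<omega> + 1 * X t \<omega>)"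
    by (rule ext) (simp add: Y_def W_def algebra_simps)
  have e2: "Y = (\<lambda>\<omega>. 0 * X r \<omega> + 0 * X s \<omega> + 1 * X t \<omega>)"
    by (rule ext) (simp add: Y_def)
  have e3: "W = (\<lambda>\<omega>. 1 * X r \<omega> + (-d) * X s \<omega> + 0 * X t \<omega>)"
    by (rule ext) (simp add: W_def algebra_simps)
  define Qa where "Qa = RR N a H r r + d^2 * RR N a H s s + RR N a H t t - 2*d*RR N a H r s + 2*RR N a H r t - 2*d*RR N a H s t"
  define Qy where "Qy = RR N a H t t"
  define Qw where "Qw = RR N a H r r + d^2 * RR N a H s s - 2*d*RR N a H r s"
  have c1: "char (distr M borel (\<lambda>\<omega>. Y \<omega> + W \<omega>)) 1 = complex_of_real (exp (- Qa / 2))"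
    unfolding e1 gX Qa_def by (simp add: algebra_simps power2_eq_square)
  have c2: "char (distr M borel Y) 1 = complex_of_real (exp (- Qy / 2))"
    by (subst e2, subst gX) (simp add: Qy_def)
  have c3: "char (distr M borel W) 1 = complex_of_real (exp (- Qw / 2))"
    by (subst e3, subst gX) (simp add: Qw_def algebra_simps power2_eq_square)
  have h1: "exp (- Qa / 2) = exp (- Qy / 2) * exp (- Qw / 2)"
    using cadd unfolding c1 c2 c3 by (metis of_real_eq_iff of_real_mult)
  have h2: "exp (- Qy / 2) * exp (- Qw / 2) = exp (- Qy / 2 + - Qw / 2)" by (rule exp_add[symmetric])
  from h1 h2 have "exp (- Qa / 2) = exp (- Qy / 2 + - Qw / 2)" by (rule trans)
  then have "- Qa / 2 = - Qy / 2 + - Qw / 2" by simp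
  then have "RR N a H r t = d * RR N a H s t" unfolding Qa_def Qy_def Qw_def by (simp add: field_simps)
  then have "RR N a H r t * RR N a H s s = RR N a H r s * RR N a H s t" unfolding rs_eq by simp
  then show False using rst(5) RR_sym[of N a H t r] RR_sym[of N a H t s] by simp
qed


end
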